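(* Let $s\ge 0$, $t\ge 1$, and let $G=K_s\vee K_{2*t}$. Let $A$ be a clique of size $s+t$ in $G$ and let $B=V(G)\setminus A$. If $f:V(G)\to\mathbb{Z}^+$ satisfies $f(v)\ge s+t$ for all $v\in A$ and $f(v)\ge t$ for all $v\in B$, then $G$ is $f$-AT.
   Context: $K_{2*t}$ is the complete multipartite graph with $t$ parts of size $2$; $G_1\vee G_2$ (the join) is the disjoint union of $G_1$ and $G_2$ together with all edges between them. For a graph $G$ and $f:V(G)\to\mathbb{Z}^+$, an orientation $D$ of $E(G)$ is an Alon--Tarsi orientation for $f$ if $d^+_D(v)<f(v)$ for every vertex $v$ and the number of spanning Eulerian subgraphs of $D$ (spanning subdigraphs in which every vertex has equal in- and out-degree) with an even number of edges differs from the number with an odd number of edges; $G$ is $f$-AT if such an orientation exists. *)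

theory Defs
  imports Main
begin

text \<open>Simple graphs: a vertex set V and an edge set E of 2-element subsets of V.
  Digraphs (orientations, subdigraphs) are sets of arcs (u,v).\<close>

definition out_deg :: "('a \<times> 'a) set \<Rightarrow> 'a \<Rightarrow> nat" where
  "out_deg D v = card {w. (v, w) \<in> D}"

definition in_deg :: "('a \<times> 'a) set \<Rightarrow> 'a \<Rightarrow> nat" where
  "in_deg D v = card {w. (w, v) \<in> D}"

definition is_orientation :: "'a set \<Rightarrow> 'a set set \<Rightarrow> ('a \<times> 'a) set \<Rightarrow> bool" where
  "is_orientation V E D \<longleftrightarrow>
     (\<forall>(u, v) \<in> D. u \<noteq> v \<and> {u, v} \<in> E) \<and>
     (\<forall>u v. u \<noteq> v \<and> {u, v} \<in> E \<longrightarrow> ((u, v) \<in> D \<longleftrightarrow> (v, u) \<notin> D))"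

definition eulerian_sub :: "'a set \<Rightarrow> ('a \<times> 'a) set \<Rightarrow> ('a \<times> 'a) set \<Rightarrow> bool" where
  "eulerian_sub V D H \<longleftrightarrow> H \<subseteq> D \<and> (\<forall>v\<in>V. in_deg H v = out_deg H v)"

definition EE :: "'a set \<Rightarrow> ('a \<times> 'a) set \<Rightarrow> nat" where
  "EE V D = card {H. eulerian_sub V D H \<and> even (card H)}"

definition EO :: "'a set \<Rightarrow> ('a \<times> 'a) set \<Rightarrow> nat" where
  "EO V D = card {H. eulerian_sub V D H \<and> odd (card H)}"

definition AT_orientation :: "'a set \<Rightarrow> 'a set set \<Rightarrow> ('a \<Rightarrow> nat) \<Rightarrow> ('a \<times> 'a) set \<Rightarrow> bool" where
  "AT_orientation V E f D \<longleftrightarrow>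
     is_orientation V E D \<and> (\<forall>v\<in>V. out_deg D v < f v) \<and> EE V D \<noteq> EO V D"

definition f_AT :: "'a set \<Rightarrow> 'a set set \<Rightarrow> ('a \<Rightarrow> nat) \<Rightarrow> bool" where
  "f_AT V E f \<longleftrightarrow> (\<exists>D. AT_orientation V E f D)"

definition is_clique :: "'a set set \<Rightarrow> 'a set \<Rightarrow> bool" where
  "is_clique E A \<longleftrightarrow> (\<forall>u\<in>A. \<forall>v\<in>A. u \<noteq> v \<longrightarrow> {u, v} \<in> E)"

text \<open>The graph K_s \<or> K_{2*t}: vertices Inl i (i < s) form K_s, vertices
  Inr (j,k) (j < t, k < 2) form K_{2*t} whose parts are {Inr (j,0), Inr (j,1)}.\<close>
definition join_verts :: "nat \<Rightarrow> nat \<Rightarrow> (nat + nat \<times> nat) set" where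
  "join_verts s t = Inl ` {..<s} \<union> Inr ` ({..<t} \<times> {..<2})"

definition join_edges :: "nat \<Rightarrow> nat \<Rightarrow> (nat + nat \<times> nat) set set" where
  "join_edges s t = {{u, v} | u v. u \<in> join_verts s t \<and> v \<in> join_verts s t \<and> u \<noteq> v \<and>
      \<not> (\<exists>j. {u, v} = {Inr (j, 0), Inr (j, 1)})}"

end

theory Submission
  imports Defs "HOL-Library.FuncSet" Complex_Main
begin

definition phiS :: "'a::field set \<Rightarrow> 'a \<Rightarrow> 'a" where
  "phiS S x = (\<Prod>y\<in>S-{x}. x - y)"

definition lagF :: "'a::field set \<Rightarrow> nat \<Rightarrow> 'a" where
  "lagF S k = (\<Sum>x\<in>S. x^k / phiS S x)"

lemma phiS_nz: "finite S \<Longrightarrow> phiS S x \<noteq> 0"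
  unfolding phiS_def by (auto simp: prod_zero_iff)

lemma lagF_rec:
  assumes "finite T" "b \<in> T"
  shows "lagF T (Suc k) = b * lagF T k + lagF (T-{b}) k"
proof -
  have "lagF T (Suc k) = (\<Sum>x\<in>T. b * (x^k / phiS T x) + x^k*(x-b) / phiS T x)"
    unfolding lagF_def by (intro sum.cong refl) (simp add: diff_divide_distrib algebra_simps)
  also have "\<dots> = b * lagF T k + (\<Sum>x\<in>T. x^k*(x-b) / phiS T x)"
    unfolding lagF_def by (simp add: sum.distrib sum_distrib_left)
  also have "(\<Sum>x\<in>T. x^k*(x-b) / phiS T x) = (\<Sum>x\<in>T-{b}. x^k*(x-b) / phiS T x)"
    using assms by (subst sum.remove[of _ b]) auto
  also have "\<dots> = lagF (T-{b}) k"
    unfolding lagF_def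
  proof (intro sum.cong refl)
    fix x assume x: "x \<in> T - {b}"
    have "T - {x} = insert b (T - {b} - {x})" using x assms by auto
    hence "phiS T x = (x - b) * phiS (T-{b}) x"
      unfolding phiS_def using assms x by (simp add: prod.insert)
    moreover have "x - b \<noteq> 0" "phiS (T-{b}) x \<noteq> 0" using x phiS_nz[of "T-{b}" x] assms by auto
    ultimately show "x ^ k * (x - b) / phiS T x = x ^ k / phiS (T - {b}) x"
      by simp
  qed
  finally show ?thesis .
qed

lemma lagF_main:
  "\<forall>S::'a::field set. finite S \<and> card S = Suc n \<longrightarrow>
      (\<forall>k. k < n \<longrightarrow> lagF S k = 0) \<and> lagF S n = 1"
proof (induction n)
  case 0
  show ?case
  proof (intro allI impI conjI)
    fix S :: "'a set" assume "finite S \<and> card S = Suc 0"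
    then obtain a where "S = {a}" by (auto simp: card_Suc_eq)
    thus "lagF S 0 = 1" by (simp add: lagF_def phiS_def)
  qed auto
next
  case (Suc n)
  note IHo = Suc.IH
  show ?case
  proof (intro allI impI)
    fix T :: "'a set" assume T: "finite T \<and> card T = Suc (Suc n)"
    then obtain a B where aB: "T = insert a B" "a \<notin> B" "card B = Suc n"
      using T card_Suc_eq[of T "Suc n"] by blast
    then obtain b where "b \<in> B" by fastforce
    hence ab: "a \<in> T" "b \<in> T" "a \<noteq> b" using aB by auto
    have cA: "finite (T-{a}) \<and> card (T-{a}) = Suc n" using T ab by auto
    have cB: "finite (T-{b}) \<and> card (T-{b}) = Suc n" using T ab by auto
    have eq0: "lagF (T-{a}) 0 = lagF (T-{b}) 0"
      using IHo cA cB by (cases n) auto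
    have "a * lagF T 0 + lagF (T-{a}) 0 = b * lagF T 0 + lagF (T-{b}) 0"
      using lagF_rec[of T a 0] lagF_rec[of T b 0] T ab by simp
    hence "(a - b) * lagF T 0 = 0" using eq0 by (simp add: algebra_simps)
    hence z0: "lagF T 0 = 0" using ab by simp
    have low: "k < Suc n \<Longrightarrow> lagF T k = 0" for k
    proof (induction k)
      case 0 thus ?case using z0 by simp
    next
      case (Suc k)
      thus ?case using lagF_rec[of T a k] T ab IHo cA by simp
    qed
    have "lagF T (Suc n) = a * lagF T n + lagF (T-{a}) n"
      using lagF_rec[of T a n] T ab by simp
    also have "\<dots> = 1" using low[of n] IHo cA by simp
    finally show "(\<forall>k<Suc n. lagF T k = 0) \<and> lagF T (Suc n) = 1" using low by blast
  qed
qed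

lemma lagF_vals:
  fixes S :: "'a::field set"
  assumes "finite S" "S \<noteq> {}" "k \<le> card S - 1"
  shows "lagF S k = (if k = card S - 1 then 1 else 0)"
proof -
  obtain n where n: "card S = Suc n" using assms by (metis card_0_eq not0_implies_Suc)
  show ?thesis using lagF_main[of n] assms n by auto
qed


locale orsetup =
  fixes V :: "'v set" and E :: "'v set set" and R :: "('v \<times> 'v) set"
  assumes finV: "finite V"
    and Esub: "\<forall>e\<in>E. \<exists>u v. e = {u,v} \<and> u \<in> V \<and> v \<in> V \<and> u \<noteq> v"
    and Ror: "is_orientation V E R"
begin

lemma or_edge: assumes "is_orientation V E Q" "(u,v) \<in> Q" shows "u \<noteq> v \<and> {u,v} \<in> E"
proof -
  have "\<forall>(a,b)\<in>Q. a \<noteq> b \<and> {a,b} \<in> E" using assms(1) unfolding is_orientation_def by (rule conjunct1)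
  thus ?thesis using assms(2) by blast
qed

lemma or_tot: assumes "is_orientation V E Q" "u \<noteq> v" "{u,v} \<in> E" shows "(u,v) \<in> Q \<longleftrightarrow> (v,u) \<notin> Q"
  using assms unfolding is_orientation_def by blast

lemma or_anti: "is_orientation V E Q \<Longrightarrow> (u,v) \<in> Q \<Longrightarrow> (v,u) \<notin> Q"
  using or_edge or_tot by blast

lemma or_sub: assumes "is_orientation V E Q" shows "Q \<subseteq> V \<times> V"
proof
  fix x assume "x \<in> Q"
  then obtain u v where x: "x = (u,v)" "(u,v) \<in> Q" by (cases x) auto
  hence "{u,v} \<in> E" using or_edge[OF assms] by blast
  then obtain a b where "{u,v} = {a,b}" "a \<in> V" "b \<in> V" using Esub by blast
  thus "x \<in> V \<times> V" using x by (auto simp: doubleton_eq_iff)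
qed

lemma or_fin: "is_orientation V E Q \<Longrightarrow> finite Q"
  using or_sub finV finite_subset by (metis finite_SigmaI)

lemma finR: "finite R" using or_fin Ror by blast

definition OTg :: "('v \<times> 'v) set \<Rightarrow> ('v \<times> 'v) set \<Rightarrow> ('v \<times> 'v) set" where
  "OTg X T = (X - T) \<union> T\<inverse>"

lemma OTg_or: assumes X: "is_orientation V E X" and T: "T \<subseteq> X" shows "is_orientation V E (OTg X T)"
  unfolding is_orientation_def
proof (intro conjI allI impI)
  show "\<forall>(u, v)\<in>OTg X T. u \<noteq> v \<and> {u, v} \<in> E"
  proof (intro ballI, clarify)
    fix u v assume "(u,v) \<in> OTg X T"
    hence "(u,v) \<in> X \<or> (v,u) \<in> X" using T unfolding OTg_def by auto
    thus "u \<noteq> v \<and> {u, v} \<in> E" using or_edge[OF X, of u v] or_edge[OF X, of v u]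
      by (auto simp: insert_commute)
  qed
next
  fix u v assume uv: "u \<noteq> v \<and> {u, v} \<in> E"
  have "(u,v) \<in> X \<longleftrightarrow> (v,u) \<notin> X" using or_tot[OF X, of u v] uv by blast
  thus "((u, v) \<in> OTg X T) = ((v, u) \<notin> OTg X T)"
    using T unfolding OTg_def by auto
qed

lemma OTg_inv: assumes X: "is_orientation V E X" and Q: "is_orientation V E Q" shows "OTg X (X - Q) = Q"
proof -
  have "x \<in> Q \<longleftrightarrow> x \<in> OTg X (X - Q)" for x
  proof (cases x)
    case (Pair u v)
    show ?thesis
    proof
      assume "x \<in> Q"
      hence e: "u \<noteq> v \<and> {u,v} \<in> E" using or_edge[OF Q] Pair by auto
      have "(u,v) \<in> X \<longleftrightarrow> (v,u) \<notin> X" using or_tot[OF X, of u v] e by blast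
      moreover have "(v,u) \<notin> Q" using or_anti[OF Q] \<open>x \<in> Q\<close> Pair by blast
      ultimately show "x \<in> OTg X (X - Q)"
        using Pair \<open>x \<in> Q\<close> unfolding OTg_def by auto
    next
      assume a: "x \<in> OTg X (X - Q)"
      show "x \<in> Q"
      proof (cases "(u,v) \<in> X")
        case True thus ?thesis using a Pair or_anti[OF X, of u v] unfolding OTg_def by auto
      next
        case False
        hence vu: "(v,u) \<in> X" "(v,u) \<notin> Q" using a Pair unfolding OTg_def by auto
        hence e: "v \<noteq> u \<and> {v,u} \<in> E" using or_edge[OF X] by blast
        thus ?thesis using or_tot[OF Q, of v u] vu Pair by blast
      qed
    qed
  qed
  thus ?thesis by blast
qed

lemma OTg_diff: assumes X: "is_orientation V E X" and T: "T \<subseteq> X" shows "X - OTg X T = T"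
  using T or_anti[OF X] unfolding OTg_def by auto

lemma out_fin: assumes "is_orientation V E Q" shows "finite {w. (v,w) \<in> Q}"
proof -
  have "{w. (v,w) \<in> Q} \<subseteq> V" using or_sub[OF assms] by auto
  thus ?thesis using finV finite_subset by blast
qed

lemma in_fin: assumes "is_orientation V E Q" shows "finite {w. (w,v) \<in> Q}"
proof -
  have "{w. (w,v) \<in> Q} \<subseteq> V" using or_sub[OF assms] by auto
  thus ?thesis using finV finite_subset by blast
qed

lemma sum_out: assumes "is_orientation V E Q" shows "(\<Sum>v\<in>V. out_deg Q v) = card Q"
proof -
  have "Q = Sigma V (\<lambda>v. {w. (v,w) \<in> Q})" using or_sub[OF assms] by auto
  hence "card Q = card (Sigma V (\<lambda>v. {w. (v,w) \<in> Q}))" by (rule arg_cong)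
  also have "\<dots> = (\<Sum>v\<in>V. card {w. (v,w) \<in> Q})"
    using finV out_fin[OF assms] by (simp add: card_SigmaI)
  finally show ?thesis unfolding out_deg_def by simp
qed

lemma prod_out:
  fixes c :: "'v \<Rightarrow> 'a::comm_monoid_mult"
  assumes "is_orientation V E Q"
  shows "(\<Prod>(u,v)\<in>Q. c u) = (\<Prod>v\<in>V. c v ^ out_deg Q v)"
proof -
  have "Q = Sigma V (\<lambda>v. {w. (v,w) \<in> Q})" using or_sub[OF assms] by auto
  hence "(\<Prod>(u,v)\<in>Q. c u) = (\<Prod>(u,v)\<in>Sigma V (\<lambda>v. {w. (v,w) \<in> Q}). c u)" by (rule arg_cong)
  also have "\<dots> = (\<Prod>v\<in>V. \<Prod>w\<in>{w. (v,w) \<in> Q}. c v)"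
    by (rule prod.Sigma[symmetric]) (use finV out_fin[OF assms] in auto)
  finally show ?thesis unfolding out_deg_def by simp
qed

lemma card_OTg: assumes X: "is_orientation V E X" and T: "T \<subseteq> X" shows "card (OTg X T) = card X"
proof -
  have fX: "finite X" using or_fin X by blast
  have fT: "finite T" using fX T finite_subset by blast
  have d: "(X - T) \<inter> T\<inverse> = {}" using T or_anti[OF X] by auto
  have "card (OTg X T) = card (X - T) + card (T\<inverse>)"
    unfolding OTg_def using d fT fX by (simp add: card_Un_disjoint)
  also have "card (T\<inverse>) = card T" by simp
  finally show ?thesis using card_Diff_subset[OF fT T] card_mono[OF fX T] by simp
qed

abbreviation OT where "OT T \<equiv> OTg R T"

lemma G2:
  fixes c :: "'v \<Rightarrow> 'a::comm_ring_1"
  shows "(\<Prod>(u,v)\<in>R. c u - c v) =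
    (\<Sum>T\<in>Pow R. (-1)^card T * (\<Prod>v\<in>V. c v ^ out_deg (OT T) v))"
proof -
  have "(\<Prod>(u,v)\<in>R. c u - c v) = (\<Prod>x\<in>R. (\<lambda>(u,v). - c v) x + (\<lambda>(u,v). c u) x)"
    by (intro prod.cong) auto
  also have "\<dots> = (\<Sum>T\<in>Pow R. (\<Prod>x\<in>T. (\<lambda>(u,v). - c v) x) * (\<Prod>x\<in>R-T. (\<lambda>(u,v). c u) x))"
    by (rule prod_add[OF finR])
  also have "\<dots> = (\<Sum>T\<in>Pow R. (-1)^card T * (\<Prod>v\<in>V. c v ^ out_deg (OT T) v))"
  proof (intro sum.cong refl)
    fix T assume T: "T \<in> Pow R"
    have fT: "finite T" using finR T finite_subset by blast
    have 1: "(\<Prod>x\<in>T. (\<lambda>(u,v). - c v) x) = (-1)^card T * (\<Prod>(u,v)\<in>T. c v)"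
    proof -
      have "(\<Prod>x\<in>T. (\<lambda>(u,v). - c v) x) = (\<Prod>x\<in>T. (-1) * (\<lambda>(u,v). c v) x)"
        by (intro prod.cong) auto
      also have "\<dots> = (\<Prod>x\<in>T. (-1::'a)) * (\<Prod>x\<in>T. (\<lambda>(u,v). c v) x)" by (rule prod.distrib)
      also have "\<dots> = (-1)^card T * (\<Prod>x\<in>T. (\<lambda>(u,v). c v) x)" by simp
      finally show ?thesis .
    qed
    have 2: "(\<Prod>(u,v)\<in>T. c v) = (\<Prod>(u,v)\<in>T\<inverse>. c u)"
    proof -
      have img: "T\<inverse> = (\<lambda>(u,v). (v,u)) ` T" by auto
      have inj: "inj_on (\<lambda>(u,v). (v,u)) T" by (auto simp: inj_on_def)
      have "(\<Prod>(u,v)\<in>T\<inverse>. c u) = (\<Prod>x\<in>(\<lambda>(u,v). (v,u)) ` T. (\<lambda>(u,v). c u) x)"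
        using img by simp
      also have "\<dots> = (\<Prod>x\<in>T. (\<lambda>(u,v). c u) ((\<lambda>(u,v). (v,u)) x))"
        by (simp only: prod.reindex[OF inj] comp_def)
      also have "\<dots> = (\<Prod>(u,v)\<in>T. c v)" by (intro prod.cong) auto
      finally show ?thesis by simp
    qed
    have d: "(R - T) \<inter> T\<inverse> = {}" using T or_anti[OF Ror] by auto
    have 3: "(\<Prod>(u,v)\<in>R-T. c u) * (\<Prod>(u,v)\<in>T\<inverse>. c u) = (\<Prod>(u,v)\<in>OT T. c u)"
      unfolding OTg_def using d fT finR by (simp add: prod.union_disjoint)
    have 4: "(\<Prod>(u,v)\<in>OT T. c u) = (\<Prod>v\<in>V. c v ^ out_deg (OT T) v)"
      using prod_out[OF OTg_or[OF Ror], of T c] T by simp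
    show "(\<Prod>x\<in>T. (\<lambda>(u,v). - c v) x) * (\<Prod>x\<in>R-T. (\<lambda>(u,v). c u) x) =
          (-1)^card T * (\<Prod>v\<in>V. c v ^ out_deg (OT T) v)"
      using 1 2 3 4 by (simp add: mult_ac)
  qed
  finally show ?thesis .
qed

lemma G3:
  fixes S :: "'v \<Rightarrow> 'a::field set"
  assumes fS: "\<forall>v\<in>V. finite (S v) \<and> S v \<noteq> {}"
    and sumd: "(\<Sum>v\<in>V. card (S v) - 1) = card R"
  shows "(\<Sum>c\<in>PiE V S. (\<Prod>(u,v)\<in>R. c u - c v) * (\<Prod>v\<in>V. 1 / phiS (S v) (c v))) =
    of_int (\<Sum>T\<in>{T. T \<subseteq> R \<and> (\<forall>v\<in>V. out_deg (OT T) v = card (S v) - 1)}. (-1)^card T)"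
proof -
  define good where "good T \<longleftrightarrow> (\<forall>v\<in>V. out_deg (OT T) v = card (S v) - 1)" for T
  have "(\<Sum>c\<in>PiE V S. (\<Prod>(u,v)\<in>R. c u - c v) * (\<Prod>v\<in>V. 1 / phiS (S v) (c v))) =
      (\<Sum>c\<in>PiE V S. \<Sum>T\<in>Pow R. (-1)^card T * ((\<Prod>v\<in>V. c v ^ out_deg (OT T) v) * (\<Prod>v\<in>V. 1 / phiS (S v) (c v))))"
    by (simp only: G2 sum_distrib_right mult.assoc)
  also have "\<dots> = (\<Sum>T\<in>Pow R. (-1)^card T * (\<Sum>c\<in>PiE V S. \<Prod>v\<in>V. c v ^ out_deg (OT T) v / phiS (S v) (c v)))"
    by (subst sum.swap) (simp add: sum_distrib_left prod.distrib[symmetric] divide_inverse)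
  also have "\<dots> = (\<Sum>T\<in>Pow R. (-1)^card T * (\<Prod>v\<in>V. lagF (S v) (out_deg (OT T) v)))"
    unfolding lagF_def by (subst prod_sum_PiE) (use finV fS in auto)
  also have "\<dots> = (\<Sum>T\<in>Pow R. (-1)^card T * (if good T then 1 else 0))"
  proof (intro sum.cong refl)
    fix T assume T: "T \<in> Pow R"
    show "(-1)^card T * (\<Prod>v\<in>V. lagF (S v) (out_deg (OT T) v)) = (-1)^card T * (if good T then 1 else 0)"
    proof (cases "good T")
      case True
      hence "(\<Prod>v\<in>V. lagF (S v) (out_deg (OT T) v)) = (\<Prod>v\<in>V. 1)"
      proof (intro prod.cong refl)
        fix v assume "v \<in> V"
        thus "lagF (S v) (out_deg (OT T) v) = 1"
          using fS lagF_vals[of "S v" "card (S v) - 1"] True unfolding good_def by simp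
      qed
      thus ?thesis using True by simp
    next
      case False
      have "\<exists>v\<in>V. out_deg (OT T) v < card (S v) - 1"
      proof (rule ccontr)
        assume "\<not> ?thesis"
        hence ge: "\<forall>v\<in>V. card (S v) - 1 \<le> out_deg (OT T) v" by auto
        from False obtain v where "v \<in> V" "out_deg (OT T) v \<noteq> card (S v) - 1" unfolding good_def by blast
        with ge have "\<exists>v\<in>V. card (S v) - 1 < out_deg (OT T) v" by force
        hence "(\<Sum>v\<in>V. card (S v) - 1) < (\<Sum>v\<in>V. out_deg (OT T) v)"
          using ge finV by (intro sum_strict_mono_ex1) auto
        also have "\<dots> = card R" using sum_out[OF OTg_or[OF Ror]] card_OTg[OF Ror] T by simp
        finally show False using sumd by simp
      qed
      then obtain v where v: "v \<in> V" "out_deg (OT T) v < card (S v) - 1" by blast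
      hence "lagF (S v) (out_deg (OT T) v) = 0" using lagF_vals[of "S v"] fS by auto
      hence "(\<Prod>v\<in>V. lagF (S v) (out_deg (OT T) v)) = 0" using v finV by (auto simp: prod_zero_iff)
      thus ?thesis using False by simp
    qed
  qed
  also have "\<dots> = (\<Sum>T\<in>{T. T \<subseteq> R \<and> good T}. (-1)^card T)"
  proof -
    have "(\<Sum>T\<in>Pow R. (-1)^card T * (if good T then 1 else 0)) = (\<Sum>T\<in>Pow R. if good T then (-1)^card T else (0::'a))"
      by (intro sum.cong) auto
    also have "\<dots> = sum (\<lambda>T. (-1)^card T) {T\<in>Pow R. good T}"
      by (rule sum.inter_filter[symmetric]) (use finR in simp)
    also have "{T\<in>Pow R. good T} = {T. T \<subseteq> R \<and> good T}" by auto
    finally show ?thesis .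
  qed
  finally show ?thesis unfolding good_def by simp
qed

lemma deg_flip:
  assumes X: "is_orientation V E X" and H: "H \<subseteq> X"
  shows "out_deg (OTg X H) v + out_deg H v = out_deg X v + in_deg H v"
proof -
  have e: "{w. (v,w) \<in> OTg X H} = ({w. (v,w) \<in> X} - {w. (v,w) \<in> H}) \<union> {w. (w,v) \<in> H}"
    unfolding OTg_def by auto
  have d: "({w. (v,w) \<in> X} - {w. (v,w) \<in> H}) \<inter> {w. (w,v) \<in> H} = {}"
    using H or_anti[OF X] by auto
  have f1: "finite {w. (v,w) \<in> X}" using out_fin[OF X] .
  have f2: "finite {w. (w,v) \<in> H}" using in_fin[OF X] H finite_subset[of "{w. (w,v) \<in> H}" "{w. (w,v) \<in> X}"] by auto
  have sub: "{w. (v,w) \<in> H} \<subseteq> {w. (v,w) \<in> X}" using H by auto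
  have "out_deg (OTg X H) v = card ({w. (v,w) \<in> X} - {w. (v,w) \<in> H}) + in_deg H v"
    unfolding out_deg_def in_deg_def e using d f1 f2 by (simp add: card_Un_disjoint)
  moreover have "card ({w. (v,w) \<in> X} - {w. (v,w) \<in> H}) + out_deg H v = out_deg X v"
    unfolding out_deg_def using card_Diff_subset[OF finite_subset[OF sub f1] sub] card_mono[OF f1 sub] by simp
  ultimately show ?thesis by simp
qed

lemma eul_sum:
  assumes X: "is_orientation V E X"
  shows "(\<Sum>H\<in>{H. eulerian_sub V X H}. (-1::int)^card H) = int (EE V X) - int (EO V X)"
proof -
  have fin: "finite {H. eulerian_sub V X H}"
  proof (rule finite_subset)
    show "{H. eulerian_sub V X H} \<subseteq> Pow X" by (auto simp: eulerian_sub_def)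
    show "finite (Pow X)" using or_fin[OF X] by simp
  qed
  have u: "{H. eulerian_sub V X H} = {H. eulerian_sub V X H \<and> even (card H)} \<union> {H. eulerian_sub V X H \<and> odd (card H)}"
    by auto
  have f1: "finite {H. eulerian_sub V X H \<and> even (card H)}" using fin by (rule finite_subset[rotated]) auto
  have f2: "finite {H. eulerian_sub V X H \<and> odd (card H)}" using fin by (rule finite_subset[rotated]) auto
  have "(\<Sum>H\<in>{H. eulerian_sub V X H}. (-1::int)^card H) =
     (\<Sum>H\<in>{H. eulerian_sub V X H \<and> even (card H)}. (-1::int)^card H) + (\<Sum>H\<in>{H. eulerian_sub V X H \<and> odd (card H)}. (-1::int)^card H)"
    by (subst u, rule sum.union_disjoint) (use f1 f2 in auto)
  also have "(\<Sum>H\<in>{H. eulerian_sub V X H \<and> even (card H)}. (-1::int)^card H) = (\<Sum>H\<in>{H. eulerian_sub V X H \<and> even (card H)}. 1)"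
    by (intro sum.cong) auto
  also have "(\<Sum>H\<in>{H. eulerian_sub V X H \<and> odd (card H)}. (-1::int)^card H) = (\<Sum>H\<in>{H. eulerian_sub V X H \<and> odd (card H)}. -1)"
    by (intro sum.cong) auto
  finally show ?thesis unfolding EE_def EO_def by simp
qed

lemma G1:
  assumes T0: "T0 \<subseteq> R"
  shows "(\<Sum>T\<in>{T. T \<subseteq> R \<and> (\<forall>v\<in>V. out_deg (OT T) v = out_deg (OT T0) v)}. (-1::int)^card T)
         = (-1)^card T0 * (int (EE V (OT T0)) - int (EO V (OT T0)))"
proof -
  define D where "D = OT T0"
  have Dor: "is_orientation V E D" unfolding D_def using OTg_or[OF Ror T0] .
  define gm where "gm H = R - OTg D H" for H
  define hm where "hm T = D - OT T" for T
  define Tg where "Tg = {T. T \<subseteq> R \<and> (\<forall>v\<in>V. out_deg (OT T) v = out_deg D v)}"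
  define Eu where "Eu = {H. eulerian_sub V D H}"
  have OTgm: "OT (gm H) = OTg D H" if "H \<subseteq> D" for H
    unfolding gm_def by (rule OTg_inv[OF Ror OTg_or[OF Dor that]])
  have gmin: "gm H \<in> Tg" if "H \<in> Eu" for H
  proof -
    have HD: "H \<subseteq> D" and io: "\<forall>v\<in>V. in_deg H v = out_deg H v" using that unfolding Eu_def eulerian_sub_def by auto
    show ?thesis unfolding Tg_def
    proof (intro CollectI conjI ballI)
      show "gm H \<subseteq> R" unfolding gm_def by auto
      fix v assume "v \<in> V"
      thus "out_deg (OT (gm H)) v = out_deg D v" using OTgm[OF HD] deg_flip[OF Dor HD, of v] io by simp
    qed
  qed
  have hmin: "hm T \<in> Eu" and ghm: "gm (hm T) = T" if "T \<in> Tg" for T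
  proof -
    have TR: "T \<subseteq> R" and deq: "\<forall>v\<in>V. out_deg (OT T) v = out_deg D v" using that unfolding Tg_def by auto
    have Qor: "is_orientation V E (OT T)" using OTg_or[OF Ror TR] .
    have HD: "hm T \<subseteq> D" unfolding hm_def by auto
    have eq: "OTg D (hm T) = OT T" unfolding hm_def by (rule OTg_inv[OF Dor Qor])
    show "hm T \<in> Eu" unfolding Eu_def eulerian_sub_def
    proof (intro CollectI conjI ballI HD)
      fix v assume "v \<in> V"
      thus "in_deg (hm T) v = out_deg (hm T) v" using deg_flip[OF Dor HD, of v] eq deq by simp
    qed
    show "gm (hm T) = T" unfolding gm_def eq using OTg_diff[OF Ror TR] .
  qed
  have hgm: "hm (gm H) = H" if "H \<in> Eu" for H
  proof -
    have HD: "H \<subseteq> D" using that unfolding Eu_def eulerian_sub_def by auto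
    show ?thesis unfolding hm_def OTgm[OF HD] using OTg_diff[OF Dor HD] .
  qed
  have par: "(-1::int)^card (gm H) = (-1)^card T0 * (-1)^card H" if "H \<in> Eu" for H
  proof -
    have HD: "H \<subseteq> D" using that unfolding Eu_def eulerian_sub_def by auto
    have fR: "finite R" using finR .
    have fD: "finite D" using or_fin[OF Dor] .
    have fH: "finite H" using fD HD finite_subset by blast
    have fT0: "finite T0" using fR T0 finite_subset by blast
    have sub1: "(H - R)\<inverse> \<subseteq> T0" using HD T0 unfolding D_def OTg_def by auto
    have aH: "\<And>a b. (a,b) \<in> H \<Longrightarrow> (b,a) \<notin> H" using HD or_anti[OF Dor] by blast
    have aT: "\<And>a b. (a,b) \<in> T0 \<Longrightarrow> (b,a) \<notin> T0" using T0 or_anti[OF Ror] by blast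
    have geq: "gm H = (H \<inter> R) \<union> (T0 - (H - R)\<inverse>)"
      using HD T0 or_anti[OF Ror] aH aT unfolding gm_def D_def OTg_def by auto
    have dis: "(H \<inter> R) \<inter> (T0 - (H - R)\<inverse>) = {}" using HD T0 aT unfolding D_def OTg_def by auto
    have c1: "card (gm H) = card (H \<inter> R) + card (T0 - (H - R)\<inverse>)"
      unfolding geq using dis fH fT0 by (simp add: card_Un_disjoint)
    have c2: "card (T0 - (H - R)\<inverse>) + card (H - R) = card T0"
      using card_Diff_subset[OF finite_subset[OF sub1 fT0] sub1] card_mono[OF fT0 sub1] by simp
    have c3: "card H = card (H \<inter> R) + card (H - R)"
      using fH by (metis card_Int_Diff)
    have "card (gm H) + card H = card T0 + 2 * card (H \<inter> R)" using c1 c2 c3 by simp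
    hence e: "card (gm H) + 2 * card H = card T0 + card H + 2 * card (H \<inter> R)" by simp
    have "(-1::int)^card (gm H) = (-1)^(card (gm H) + 2 * card H)" by (simp add: power_add power_mult)
    also have "\<dots> = (-1)^(card T0 + card H + 2 * card (H \<inter> R))" by (simp only: e)
    also have "\<dots> = (-1)^card T0 * (-1)^card H" by (simp add: power_add power_mult)
    finally show ?thesis .
  qed
  have "(\<Sum>T\<in>Tg. (-1::int)^card T) = (\<Sum>H\<in>Eu. (-1)^card T0 * (-1)^card H)"
  proof (rule sum.reindex_bij_witness[of _ gm hm])
    show "\<And>a. a \<in> Tg \<Longrightarrow> gm (hm a) = a" using ghm by blast
    show "\<And>a. a \<in> Tg \<Longrightarrow> hm a \<in> Eu" using hmin by blast
    show "\<And>b. b \<in> Eu \<Longrightarrow> hm (gm b) = b" using hgm by blast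
    show "\<And>b. b \<in> Eu \<Longrightarrow> gm b \<in> Tg" using gmin by blast
    show "\<And>a. a \<in> Tg \<Longrightarrow> (-1)^card T0 * (-1)^card (hm a) = (-1::int)^card a"
      using par hmin ghm by metis
  qed
  also have "\<dots> = (-1)^card T0 * (int (EE V D) - int (EO V D))"
    unfolding Eu_def using eul_sum[OF Dor] by (simp only: sum_distrib_left[symmetric])
  finally show ?thesis unfolding Tg_def D_def .
qed

lemma AT_from_CN:
  fixes S :: "'v \<Rightarrow> 'a::field set" and f :: "'v \<Rightarrow> nat"
  assumes fS: "\<forall>v\<in>V. finite (S v) \<and> S v \<noteq> {}"
    and sumd: "(\<Sum>v\<in>V. card (S v) - 1) = card R"
    and nz: "(\<Sum>c\<in>PiE V S. (\<Prod>(u,v)\<in>R. c u - c v) * (\<Prod>v\<in>V. 1 / phiS (S v) (c v))) \<noteq> 0"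
    and fb: "\<forall>v\<in>V. card (S v) \<le> f v"
  shows "f_AT V E f"
proof -
  define Gd where "Gd = {T. T \<subseteq> R \<and> (\<forall>v\<in>V. out_deg (OT T) v = card (S v) - 1)}"
  have "of_int (\<Sum>T\<in>Gd. (-1::int)^card T) \<noteq> (0::'a)" using nz unfolding G3[OF fS sumd] Gd_def .
  hence nz2: "(\<Sum>T\<in>Gd. (-1::int)^card T) \<noteq> 0" by (metis of_int_0)
  hence "Gd \<noteq> {}" by auto
  then obtain T0 where T0: "T0 \<in> Gd" by blast
  have T0R: "T0 \<subseteq> R" and deg: "\<forall>v\<in>V. out_deg (OT T0) v = card (S v) - 1" using T0 unfolding Gd_def by auto
  have GdE: "Gd = {T. T \<subseteq> R \<and> (\<forall>v\<in>V. out_deg (OT T) v = out_deg (OT T0) v)}"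
    unfolding Gd_def using deg by auto
  have "(\<Sum>T\<in>Gd. (-1::int)^card T) = (-1)^card T0 * (int (EE V (OT T0)) - int (EO V (OT T0)))"
    unfolding GdE by (rule G1[OF T0R])
  hence "(-1::int)^card T0 * (int (EE V (OT T0)) - int (EO V (OT T0))) \<noteq> 0" using nz2 by simp
  hence ne: "EE V (OT T0) \<noteq> EO V (OT T0)" by auto
  have "AT_orientation V E f (OT T0)"
    unfolding AT_orientation_def
  proof (intro conjI ballI ne)
    show "is_orientation V E (OT T0)" using OTg_or[OF Ror T0R] .
    fix v assume v: "v \<in> V"
    have "card (S v) \<noteq> 0" using fS v by auto
    moreover have "card (S v) \<le> f v" using fb v by blast
    moreover have "out_deg (OT T0) v = card (S v) - 1" using deg v by blast
    ultimately show "out_deg (OT T0) v < f v" by linarith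
  qed
  thus ?thesis unfolding f_AT_def by blast
qed
end

definition RR :: "nat \<Rightarrow> nat \<Rightarrow> ((nat + nat \<times> nat) \<times> (nat + nat \<times> nat)) set" where
  "RR s t = {(Inl i, Inl i') | i i'. i < i' \<and> i' < s}
         \<union> {(Inl i, Inr (j,k)) | i j k. i < s \<and> j < t \<and> k < 2}
         \<union> {(Inr (j,k), Inr (j',k')) | j k j' k'. j < j' \<and> j' < t \<and> k < 2 \<and> k' < 2}"

lemma jv_Inl[simp]: "Inl i \<in> join_verts s t \<longleftrightarrow> i < s"
  unfolding join_verts_def by auto
lemma jv_Inr[simp]: "Inr (j,k) \<in> join_verts s t \<longleftrightarrow> j < t \<and> k < 2"
  unfolding join_verts_def by auto

definition pm :: "nat + nat \<times> nat \<Rightarrow> nat + nat \<times> nat \<Rightarrow> bool" where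
  "pm u v \<longleftrightarrow> (\<exists>j. {u,v} = {Inr(j,0),Inr(j,1)})"

lemma je_iff0: "{u,v} \<in> join_edges s t \<longleftrightarrow>
   u \<in> join_verts s t \<and> v \<in> join_verts s t \<and> u \<noteq> v \<and> \<not>(\<exists>j. {u,v} = {Inr(j,0),Inr(j,1)})"
proof
  assume "{u,v} \<in> join_edges s t"
  then obtain a b where ab: "{u,v} = {a,b}" "a \<in> join_verts s t" "b \<in> join_verts s t" "a \<noteq> b"
     "\<not>(\<exists>j. {a,b} = {Inr(j,0),Inr(j,1)})" unfolding join_edges_def by blast
  have u: "u \<in> {a,b}" using ab(1) by (metis insertI1)
  have v: "v \<in> {a,b}" using ab(1) by (metis insertI1 insert_commute)
  have "u \<noteq> v"
  proof
    assume "u = v"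
    hence "{a,b} = {u}" using ab(1) by simp
    hence "a \<in> {u}" "b \<in> {u}" by blast+
    thus False using ab(4) by simp
  qed
  moreover have "u \<in> join_verts s t" using u ab(2,3) by blast
  moreover have "v \<in> join_verts s t" using v ab(2,3) by blast
  moreover have "\<not>(\<exists>j. {u,v} = {Inr(j,0),Inr(j,1)})" unfolding ab(1) by (rule ab(5))
  ultimately show "u \<in> join_verts s t \<and> v \<in> join_verts s t \<and> u \<noteq> v \<and> \<not>(\<exists>j. {u,v} = {Inr(j,0),Inr(j,1)})"
    by blast
next
  assume "u \<in> join_verts s t \<and> v \<in> join_verts s t \<and> u \<noteq> v \<and> \<not>(\<exists>j. {u,v} = {Inr(j,0),Inr(j,1)})"
  thus "{u,v} \<in> join_edges s t" unfolding join_edges_def by blast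
qed

lemma je_iff: "{u,v} \<in> join_edges s t \<longleftrightarrow>
   u \<in> join_verts s t \<and> v \<in> join_verts s t \<and> u \<noteq> v \<and> \<not> pm u v"
  unfolding pm_def by (rule je_iff0)

lemma pm_Inr0: "k < 2 \<Longrightarrow> k' < 2 \<Longrightarrow> (\<exists>jj. {Inr(j,k), Inr(j',k')} = {Inr(jj,0::nat),Inr(jj,1)}) \<longleftrightarrow> j = j' \<and> k \<noteq> k'"
  by (auto simp: doubleton_eq_iff)

lemma pm_Inr: "k < 2 \<Longrightarrow> k' < 2 \<Longrightarrow> pm (Inr(j,k)) (Inr(j',k')) \<longleftrightarrow> j = j' \<and> k \<noteq> k'"
  unfolding pm_def by (rule pm_Inr0)

lemma pm_Inl1: "\<not> pm (Inl i) v"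
proof
  assume "pm (Inl i) v"
  then obtain jj where "{Inl i, v} = {Inr(jj,0::nat),Inr(jj,1)}" unfolding pm_def by blast
  hence "Inl i \<in> {Inr(jj,0::nat),Inr(jj,1::nat)}" by (metis insertI1)
  thus False by simp
qed

lemma adj_Inr: "{Inr(j,k), Inr(j',k')} \<in> join_edges s t \<longleftrightarrow> j < t \<and> j' < t \<and> k < 2 \<and> k' < 2 \<and> j \<noteq> j'"
proof
  assume L: "{Inr(j,k), Inr(j',k')} \<in> join_edges s t"
  have "Inr(j,k) \<in> join_verts s t" "Inr(j',k') \<in> join_verts s t" 
    and b: "Inr(j,k) \<noteq> (Inr(j',k') :: nat + nat \<times> nat)"
    and c: "\<not> pm (Inr(j,k)) (Inr(j',k'))" using L unfolding je_iff by simp_all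
  hence a: "j < t" "j' < t" "k < 2" "k' < 2" by simp_all
  have "j \<noteq> j'"
  proof
    assume jj: "j = j'"
    hence "k \<noteq> k'" using b by simp
    thus False using c pm_Inr[OF a(3) a(4)] jj by simp
  qed
  thus "j < t \<and> j' < t \<and> k < 2 \<and> k' < 2 \<and> j \<noteq> j'" using a by simp
next
  assume R: "j < t \<and> j' < t \<and> k < 2 \<and> k' < 2 \<and> j \<noteq> j'"
  thus "{Inr(j,k), Inr(j',k')} \<in> join_edges s t" unfolding je_iff using pm_Inr[of k k' j j'] by simp
qed

lemma adj_Inl_Inl: "{Inl i, Inl i'} \<in> join_edges s t \<longleftrightarrow> i < s \<and> i' < s \<and> i \<noteq> i'"
  unfolding je_iff using pm_Inl1[of i "Inl i'"] by simp

lemma adj_Inl_Inr: "{Inl i, Inr (j,k)} \<in> join_edges s t \<longleftrightarrow> i < s \<and> j < t \<and> k < 2"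
  unfolding je_iff using pm_Inl1[of i "Inr (j,k)"] by simp

lemma RR_or: "is_orientation (join_verts s t) (join_edges s t) (RR s t)"
  unfolding is_orientation_def
proof (intro conjI allI impI)
  show "\<forall>(u, v)\<in>RR s t. u \<noteq> v \<and> {u, v} \<in> join_edges s t"
    unfolding RR_def by (auto simp: adj_Inr adj_Inl_Inl adj_Inl_Inr)
next
  fix u v :: "nat + nat \<times> nat"
  assume uv: "u \<noteq> v \<and> {u, v} \<in> join_edges s t"
  show "((u, v) \<in> RR s t) = ((v, u) \<notin> RR s t)"
  proof (cases u)
    case (Inl i) note u = this
    show ?thesis
    proof (cases v)
      case (Inl i')
      hence "{Inl i, Inl i'} \<in> join_edges s t" using u uv by simp
      hence "i < s \<and> i' < s \<and> i \<noteq> i'" by (simp add: adj_Inl_Inl)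
      thus ?thesis using u Inl unfolding RR_def by auto
    next
      case (Inr p)
      then obtain j k where v: "v = Inr (j,k)" by (cases p) auto
      hence "{Inl i, Inr (j,k)} \<in> join_edges s t" using u uv by simp
      hence "i < s \<and> j < t \<and> k < 2" by (simp add: adj_Inl_Inr)
      thus ?thesis using u v unfolding RR_def by auto
    qed
  next
    case (Inr p) 
    then obtain j k where u: "u = Inr (j,k)" by (cases p) auto
    show ?thesis
    proof (cases v)
      case (Inl i')
      hence "{Inl i', Inr (j,k)} \<in> join_edges s t" using uv u by (simp add: insert_commute)
      hence "i' < s \<and> j < t \<and> k < 2" by (simp add: adj_Inl_Inr)
      thus ?thesis using u Inl unfolding RR_def by auto
    next
      case (Inr p)
      then obtain j' k' where v: "v = Inr (j',k')" by (cases p) auto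
      hence "{Inr (j,k), Inr (j',k')} \<in> join_edges s t" using u uv by simp
      hence "j < t \<and> j' < t \<and> k < 2 \<and> k' < 2 \<and> j \<noteq> j'" by (simp add: adj_Inr)
      thus ?thesis using u v unfolding RR_def by auto
    qed
  qed
qed

lemma fin_jv: "finite (join_verts s t)" unfolding join_verts_def by auto

lemma conc_orsetup: "orsetup (join_verts s t) (join_edges s t) (RR s t)"
proof
  show "finite (join_verts s t)" by (rule fin_jv)
  show "\<forall>e\<in>join_edges s t. \<exists>u v. e = {u, v} \<and> u \<in> join_verts s t \<and> v \<in> join_verts s t \<and> u \<noteq> v"
    unfolding join_edges_def by blast
  show "is_orientation (join_verts s t) (join_edges s t) (RR s t)" by (rule RR_or)
qed


lemma Inr_cases: obtains (L) i where "v = Inl i" | (R) j k where "v = Inr (j,k)"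
  by (cases v) auto

lemma A_struct:
  assumes Asub: "A \<subseteq> join_verts s t" and cA: "card A = s + t" and cl: "is_clique (join_edges s t) A"
  shows "\<forall>i<s. Inl i \<in> A" and "\<forall>j<t. (Inr(j,0) \<in> A) \<noteq> (Inr(j,1) \<in> A)"
proof -
  define \<pi> where "\<pi> v = (case v of Inl i \<Rightarrow> i | Inr (j,k) \<Rightarrow> s + j)" for v :: "nat + nat \<times> nat"
  have \<pi>L[simp]: "\<pi> (Inl i) = i" for i unfolding \<pi>_def by simp
  have \<pi>R[simp]: "\<pi> (Inr (j,k)) = s + j" for j k unfolding \<pi>_def by simp
  have noadj: "{Inr(j,k), Inr(j,k')} \<notin> join_edges s t" for j k k' by (simp add: adj_Inr)
  have inj: "inj_on \<pi> A"
  proof (rule inj_onI)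
    fix x y assume x: "x \<in> A" and y: "y \<in> A" and e: "\<pi> x = \<pi> y"
    show "x = y"
    proof (rule ccontr)
      assume ne: "x \<noteq> y"
      have xy: "{x,y} \<in> join_edges s t" using cl x y ne unfolding is_clique_def by blast
      show False
      proof (cases x rule: Inr_cases)
        case (L i)
        show False
        proof (cases y rule: Inr_cases)
          case (L i') thus False using \<open>x = Inl i\<close> e ne by simp
        next
          case (R j k) thus False using \<open>x = Inl i\<close> e x Asub by auto
        qed
      next
        case (R j k)
        show False
        proof (cases y rule: Inr_cases)
          case (L i') thus False using \<open>x = Inr (j,k)\<close> e y Asub by auto
        next
          case (R j' k') thus False using \<open>x = Inr (j,k)\<close> e xy noadj by simp
        qed
      qed
    qed
  qed
  have sub: "\<pi> ` A \<subseteq> {..<s+t}"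
  proof
    fix n assume "n \<in> \<pi> ` A"
    then obtain x where x: "x \<in> A" "n = \<pi> x" by blast
    hence xv: "x \<in> join_verts s t" using Asub by blast
    show "n \<in> {..<s+t}"
      by (cases x rule: Inr_cases) (use x xv in auto)
  qed
  have finA: "finite A" using Asub fin_jv finite_subset by blast
  have img: "\<pi> ` A = {..<s+t}"
    using card_subset_eq[OF _ sub] card_image[OF inj] cA by simp
  show "\<forall>i<s. Inl i \<in> A"
  proof (intro allI impI)
    fix i assume i: "i < s"
    hence "i \<in> \<pi> ` A" using img by simp
    then obtain x where x: "x \<in> A" "\<pi> x = i" by force
    show "Inl i \<in> A"
    proof (cases x rule: Inr_cases)
      case (L i') thus ?thesis using x by simp
    next
      case (R j k) thus ?thesis using x i by simp
    qed
  qed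
  show "\<forall>j<t. (Inr(j,0) \<in> A) \<noteq> (Inr(j,1) \<in> A)"
  proof (intro allI impI)
    fix j assume j: "j < t"
    hence "s + j \<in> \<pi> ` A" using img by simp
    then obtain x where x: "x \<in> A" "\<pi> x = s + j" by force
    show "(Inr(j,0) \<in> A) \<noteq> (Inr(j,1) \<in> A)"
    proof (cases x rule: Inr_cases)
      case (L i') thus ?thesis using x Asub by auto
    next
      case (R j' k)
      hence jj: "j' = j" and k: "k < 2" using x Asub by auto
      have "\<not> (Inr(j,0) \<in> A \<and> Inr(j,1) \<in> A)"
      proof
        assume "Inr(j,0) \<in> A \<and> Inr(j,1) \<in> A"
        hence "{Inr(j,0), Inr(j,1::nat)} \<in> join_edges s t" using cl unfolding is_clique_def by simp
        thus False using noadj by blast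
      qed
      moreover have "Inr(j,0) \<in> A \<or> Inr(j,1) \<in> A" using k x R jj by (cases k) auto
      ultimately show ?thesis by blast
    qed
  qed
qed


definition SS :: "nat \<Rightarrow> nat \<Rightarrow> (nat + nat \<times> nat) set \<Rightarrow> (nat + nat \<times> nat) \<Rightarrow> real set" where
  "SS s t A v = (case v of Inl i \<Rightarrow> real ` ({..<t} \<union> {t+i..<s+t})
      | Inr p \<Rightarrow> (if v \<in> A then real ` {..<s+t} else real ` {..<t}))"

lemma SS_Inl: "SS s t A (Inl i) = real ` ({..<t} \<union> {t+i..<s+t})" unfolding SS_def by simp
lemma SS_Inr: "SS s t A (Inr p) = (if Inr p \<in> A then real ` {..<s+t} else real ` {..<t})" unfolding SS_def by simp

lemma card_SS_Inl: "i < s \<Longrightarrow> card (SS s t A (Inl i)) = t + (s - i)"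
proof -
  assume i: "i < s"
  have "card (SS s t A (Inl i)) = card ({..<t} \<union> {t+i..<s+t})"
    unfolding SS_Inl by (rule card_image) (simp add: inj_on_def)
  also have "\<dots> = card {..<t} + card {t+i..<s+t}" by (rule card_Un_disjoint) auto
  finally show ?thesis using i by simp
qed

lemma card_SS_Inr: "card (SS s t A (Inr p)) = (if Inr p \<in> A then s + t else t)"
  unfolding SS_Inr by (simp add: card_image inj_on_def)

lemma fin_SS: "finite (SS s t A v)"
  unfolding SS_def by (cases v) auto

lemma ne_SS: "t \<ge> 1 \<Longrightarrow> SS s t A v \<noteq> {}"
  unfolding SS_def by (cases v) (auto simp: lessThan_empty_iff)

definition Lt :: "nat \<Rightarrow> (nat \<times> nat) set" where "Lt n = {(i,i'). i < i' \<and> i' < n}"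

lemma fin_Lt: "finite (Lt n)"
proof -
  have "Lt n \<subseteq> {..<n} \<times> {..<n}" unfolding Lt_def by auto
  thus ?thesis by (rule finite_subset) simp
qed

lemma card_Lt: "2 * card (Lt n) = n * (n - 1)"
proof (induction n rule: nat.induct)
  case zero thus ?case by (simp add: Lt_def)
next
  case (Suc n)
  have e: "Lt (Suc n) = Lt n \<union> (\<lambda>i. (i,n)) ` {..<n}" unfolding Lt_def by auto
  have "card (Lt (Suc n)) = card (Lt n) + card ((\<lambda>i. (i,n)) ` {..<n})"
    unfolding e by (rule card_Un_disjoint[OF fin_Lt]) (auto simp: Lt_def)
  also have "card ((\<lambda>i. (i,n)) ` {..<n}) = n" by (simp add: card_image inj_on_def)
  finally show ?case using Suc by (cases n) (simp_all add: algebra_simps)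
qed

lemma sum_rev: "2 * (\<Sum>i<s. (s - 1 - i)) = (s::nat) * (s - 1)"
proof (induction s)
  case 0 thus ?case by simp
next
  case (Suc s)
  have "(\<Sum>i<Suc s. (Suc s - 1 - i)) = (\<Sum>i<s. (s - i))" by simp
  also have "\<dots> = (\<Sum>i<s. (s - 1 - i) + 1)" by (intro sum.cong) auto
  also have "\<dots> = (\<Sum>i<s. (s - 1 - i)) + (\<Sum>i<s. 1)" by (rule sum.distrib)
  also have "\<dots> = (\<Sum>i<s. (s - 1 - i)) + s" by simp
  finally show ?case using Suc by (cases s) (simp_all add: algebra_simps)
qed

lemma jv_eq: "join_verts s t = Inl ` {..<s} \<union> Inr ` ({..<t} \<times> {..<2})" unfolding join_verts_def ..

lemma sum_jv:
  fixes g :: "nat + nat \<times> nat \<Rightarrow> 'b::comm_monoid_add"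
  shows "(\<Sum>v\<in>join_verts s t. g v) = (\<Sum>i<s. g (Inl i)) + (\<Sum>j<t. g (Inr (j,0)) + g (Inr (j,1)))"
proof -
  have "(\<Sum>v\<in>join_verts s t. g v) = (\<Sum>v\<in>Inl ` {..<s}. g v) + (\<Sum>v\<in>Inr ` ({..<t} \<times> {..<2}). g v)"
    unfolding jv_eq by (rule sum.union_disjoint) auto
  also have "(\<Sum>v\<in>Inl ` {..<s}. g v) = (\<Sum>i<s. g (Inl i))" by (simp add: sum.reindex)
  also have "(\<Sum>v\<in>Inr ` ({..<t} \<times> {..<2}). g v) = (\<Sum>p\<in>{..<t} \<times> {..<2}. g (Inr p))" by (simp add: sum.reindex)
  also have "\<dots> = (\<Sum>j<t. \<Sum>k<2. g (Inr (j,k)))" by (simp add: sum.cartesian_product)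
  also have "\<dots> = (\<Sum>j<t. g (Inr (j,0)) + g (Inr (j,1)))" by (simp add: numeral_2_eq_2)
  finally show ?thesis .
qed

lemma prod_jv:
  fixes g :: "nat + nat \<times> nat \<Rightarrow> 'b::comm_monoid_mult"
  shows "(\<Prod>v\<in>join_verts s t. g v) = (\<Prod>i<s. g (Inl i)) * (\<Prod>j<t. g (Inr (j,0)) * g (Inr (j,1)))"
proof -
  have "(\<Prod>v\<in>join_verts s t. g v) = (\<Prod>v\<in>Inl ` {..<s}. g v) * (\<Prod>v\<in>Inr ` ({..<t} \<times> {..<2}). g v)"
    unfolding jv_eq by (rule prod.union_disjoint) auto
  also have "(\<Prod>v\<in>Inl ` {..<s}. g v) = (\<Prod>i<s. g (Inl i))" by (simp add: prod.reindex)
  also have "(\<Prod>v\<in>Inr ` ({..<t} \<times> {..<2}). g v) = (\<Prod>p\<in>{..<t} \<times> {..<2}. g (Inr p))" by (simp add: prod.reindex)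
  also have "\<dots> = (\<Prod>j<t. \<Prod>k<2. g (Inr (j,k)))" by (simp add: prod.cartesian_product)
  also have "\<dots> = (\<Prod>j<t. g (Inr (j,0)) * g (Inr (j,1)))" by (simp add: numeral_2_eq_2)
  finally show ?thesis .
qed

definition RII :: "nat \<Rightarrow> ((nat + nat \<times> nat) \<times> (nat + nat \<times> nat)) set" where "RII s = (\<lambda>(i,i'). (Inl i, Inl i')) ` Lt s"
definition RIP :: "nat \<Rightarrow> nat \<Rightarrow> ((nat + nat \<times> nat) \<times> (nat + nat \<times> nat)) set" where "RIP s t = (\<lambda>(i,j,k). (Inl i, Inr (j,k))) ` ({..<s} \<times> {..<t} \<times> {..<2::nat})"
definition RPP :: "nat \<Rightarrow> ((nat + nat \<times> nat) \<times> (nat + nat \<times> nat)) set" where "RPP t = (\<lambda>((j,j'),(k,k')). (Inr (j,k), Inr (j',k'))) ` (Lt t \<times> ({..<2::nat} \<times> {..<2::nat}))"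

lemma RR_split: "RR s t = RII s \<union> RIP s t \<union> RPP t"
proof -
  have 1: "{(Inl i, Inl i') | i i'. i < i' \<and> i' < s} = RII s"
    unfolding RII_def Lt_def by (auto simp: image_iff)
  have 2: "{(Inl i, Inr (j,k)) | i j k. i < s \<and> j < t \<and> k < 2} = RIP s t"
    unfolding RIP_def by (auto simp: image_iff)
  have 3: "{(Inr (j,k), Inr (j',k')) | j k j' k'. j < j' \<and> j' < t \<and> k < 2 \<and> k' < 2} = RPP t"
    unfolding RPP_def Lt_def by (auto simp: image_iff)
  show ?thesis unfolding RR_def 1 2 3 ..
qed

lemma card_RR: "card (RR s t) = card (Lt s) + s * (t * 2) + card (Lt t) * 4"
proof -
  have i1: "inj_on (\<lambda>(i,i'). (Inl i :: nat + nat \<times> nat, Inl i' :: nat + nat \<times> nat)) (Lt s)" by (auto simp: inj_on_def)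
  have i2: "inj_on (\<lambda>(i,j,k). (Inl i :: nat + nat \<times> nat, Inr (j,k) :: nat + nat \<times> nat)) ({..<s} \<times> {..<t} \<times> {..<2::nat})"
    by (auto simp: inj_on_def)
  have i3: "inj_on (\<lambda>((j,j'),(k,k')). (Inr (j,k) :: nat + nat \<times> nat, Inr (j',k') :: nat + nat \<times> nat)) (Lt t \<times> ({..<2::nat} \<times> {..<2::nat}))"
    by (auto simp: inj_on_def)
  have c1: "card (RII s) = card (Lt s)" unfolding RII_def using card_image[OF i1] .
  have c2: "card (RIP s t) = s * (t * 2)" unfolding RIP_def using card_image[OF i2] by (simp add: card_cartesian_product)
  have c3: "card (RPP t) = card (Lt t) * 4" unfolding RPP_def using card_image[OF i3] by (simp add: card_cartesian_product)
  have f1: "finite (RII s)" unfolding RII_def using fin_Lt by simp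
  have f2: "finite (RIP s t)" unfolding RIP_def by simp
  have f3: "finite (RPP t)" unfolding RPP_def using fin_Lt by simp
  have d1: "RII s \<inter> RIP s t = {}" unfolding RII_def RIP_def by auto
  have d2: "(RII s \<union> RIP s t) \<inter> RPP t = {}" unfolding RII_def RIP_def RPP_def by auto
  show ?thesis unfolding RR_split using c1 c2 c3 f1 f2 f3 d1 d2
    by (simp add: card_Un_disjoint)
qed

lemma sumd_conc:
  assumes t1: "t \<ge> 1" and ex: "\<forall>j<t. (Inr(j,0) \<in> A) \<noteq> (Inr(j,1) \<in> A)"
  shows "(\<Sum>v\<in>join_verts s t. card (SS s t A v) - 1) = card (RR s t)"
proof -
  obtain t' where t': "t = Suc t'" using t1 by (cases t) auto
  have a: "(\<Sum>i<s. card (SS s t A (Inl i)) - 1) = (\<Sum>i<s. t + (s - 1 - i))"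
  proof (intro sum.cong refl)
    fix x assume "x \<in> {..<s}"
    hence x: "x < s" by simp
    have "card (SS s t A (Inl x)) = Suc t' + (s - x)" using card_SS_Inl[OF x] t' by simp
    thus "card (SS s t A (Inl x)) - 1 = t + (s - 1 - x)" using x t' by arith
  qed
  have b: "(\<Sum>j<t. (card (SS s t A (Inr (j,0))) - 1) + (card (SS s t A (Inr (j,1))) - 1)) = (\<Sum>j<t. s + t' + t')"
  proof (intro sum.cong refl)
    fix j assume "j \<in> {..<t}"
    hence "(Inr(j,0) \<in> A) \<noteq> (Inr(j,1) \<in> A)" using ex by simp
    thus "(card (SS s t A (Inr (j,0))) - 1) + (card (SS s t A (Inr (j,1))) - 1) = s + t' + t'"
      by (cases "Inr(j,0) \<in> A") (simp_all add: card_SS_Inr t')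
  qed
  have "(\<Sum>v\<in>join_verts s t. card (SS s t A v) - 1) = s * t + (\<Sum>i<s. (s - 1 - i)) + t * (s + t' + t')"
  proof -
    have e1: "(\<Sum>i<s. t + (s - 1 - i)) = (\<Sum>i<s. t) + (\<Sum>i<s. (s - 1 - i))" by (rule sum.distrib)
    have e2: "(\<Sum>i<s. t) = s * t" by simp
    have e3: "(\<Sum>j<t. s + t' + t') = t * (s + t' + t')" by simp
    show ?thesis unfolding sum_jv a b e1 e2 e3 ..
  qed
  moreover have "(\<Sum>i<s. (s - 1 - i)) = card (Lt s)" using sum_rev[of s] card_Lt[of s] by simp
  moreover have "card (Lt t) * 4 = 2 * (t * t')" using card_Lt[of t] t' by simp
  moreover have "s * (t * 2) = s * t + t * s" by simp
  ultimately show ?thesis unfolding card_RR by (simp add: add_mult_distrib2)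
qed


lemma fix_lemma:
  assumes inj: "inj_on h {..<n}" and b: "\<forall>i<n. i \<le> h i \<and> h i < (n::nat)"
  shows "\<forall>i<n. h i = i"
proof (rule ccontr)
  assume "\<not> (\<forall>i<n. h i = i)"
  then obtain i0 where i0: "i0 < n" "h i0 \<noteq> i0" by blast
  have img: "h ` {..<n} = {..<n}"
  proof (rule card_subset_eq)
    show "finite {..<n}" by simp
    show "h ` {..<n} \<subseteq> {..<n}" using b by auto
    show "card (h ` {..<n}) = card {..<n}" using card_image[OF inj] .
  qed
  have le: "\<forall>i\<in>{..<n}. i \<le> h i" using b by simp
  have "i0 \<le> h i0" using b i0 by simp
  hence "i0 < h i0" using i0(2) by linarith
  hence ex: "\<exists>a\<in>{..<n}. a < h a" using i0(1) by blast
  have "(\<Sum>i<n. i) < (\<Sum>i<n. h i)"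
    by (rule sum_strict_mono_ex1[OF _ le ex]) simp
  also have "(\<Sum>i<n. h i) = (\<Sum>i\<in>h ` {..<n}. i)" using sum.reindex[OF inj, of "\<lambda>i. i"] by simp
  also have "\<dots> = (\<Sum>i<n. i)" using img by simp
  finally show False by simp
qed

lemma off_lemma:
  fixes \<beta> :: "nat \<Rightarrow> real"
  assumes bij: "bij_betw \<beta> {..<n} Y"
  shows "(\<Prod>(j,j')\<in>Lt n. (\<beta> j - \<beta> j')^4) = (\<Prod>(y,y')\<in>{(y,y'). y \<in> Y \<and> y' \<in> Y \<and> y \<noteq> y'}. (y - y')^2)"
proof -
  define Off where "Off = {(j,j'). j < n \<and> j' < n \<and> j \<noteq> j'}"
  define sw where "sw = (\<lambda>(j::nat,j'::nat). (j',j))"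
  have Oe: "Off = Lt n \<union> sw ` Lt n" unfolding Off_def Lt_def sw_def by auto
  have dis: "Lt n \<inter> sw ` Lt n = {}" unfolding Lt_def sw_def by auto
  have fL: "finite (Lt n)" by (rule fin_Lt)
  have isw: "inj_on sw (Lt n)" unfolding sw_def by (auto simp: inj_on_def)
  have "(\<Prod>(j,j')\<in>Off. (\<beta> j - \<beta> j')^2) = (\<Prod>(j,j')\<in>Lt n. (\<beta> j - \<beta> j')^2) * (\<Prod>(j,j')\<in>sw ` Lt n. (\<beta> j - \<beta> j')^2)"
    unfolding Oe by (rule prod.union_disjoint) (use fL dis in auto)
  also have "(\<Prod>(j,j')\<in>sw ` Lt n. (\<beta> j - \<beta> j')^2) = (\<Prod>x\<in>Lt n. (\<lambda>(j,j'). (\<beta> j - \<beta> j')^2) (sw x))"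
    by (simp only: prod.reindex[OF isw] comp_def)
  also have "\<dots> = (\<Prod>(j,j')\<in>Lt n. (\<beta> j - \<beta> j')^2)"
    by (intro prod.cong refl) (auto simp: sw_def power2_commute)
  also have "(\<Prod>(j,j')\<in>Lt n. (\<beta> j - \<beta> j')^2) * (\<Prod>(j,j')\<in>Lt n. (\<beta> j - \<beta> j')^2) = (\<Prod>(j,j')\<in>Lt n. (\<beta> j - \<beta> j')^4)"
    by (simp add: prod.distrib[symmetric] case_prod_beta power_add[symmetric])
  finally have 1: "(\<Prod>(j,j')\<in>Off. (\<beta> j - \<beta> j')^2) = (\<Prod>(j,j')\<in>Lt n. (\<beta> j - \<beta> j')^4)" .
  have bb: "bij_betw (\<lambda>(j,j'). (\<beta> j, \<beta> j')) Off {(y,y'). y \<in> Y \<and> y' \<in> Y \<and> y \<noteq> y'}"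
  proof -
    have inj: "inj_on \<beta> {..<n}" and im: "\<beta> ` {..<n} = Y" using bij by (auto simp: bij_betw_def)
    show ?thesis unfolding bij_betw_def
    proof
      show "inj_on (\<lambda>(j,j'). (\<beta> j, \<beta> j')) Off"
        using inj unfolding Off_def inj_on_def by auto
      show "(\<lambda>(j,j'). (\<beta> j, \<beta> j')) ` Off = {(y,y'). y \<in> Y \<and> y' \<in> Y \<and> y \<noteq> y'}"
      proof
        show "(\<lambda>(j,j'). (\<beta> j, \<beta> j')) ` Off \<subseteq> {(y,y'). y \<in> Y \<and> y' \<in> Y \<and> y \<noteq> y'}"
          using inj im unfolding Off_def inj_on_def by auto
        show "{(y,y'). y \<in> Y \<and> y' \<in> Y \<and> y \<noteq> y'} \<subseteq> (\<lambda>(j,j'). (\<beta> j, \<beta> j')) ` Off"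
        proof clarify
          fix y y' assume y: "y \<in> Y" "y' \<in> Y" "y \<noteq> y'"
          obtain j where j: "j < n" "\<beta> j = y" using y im by auto
          obtain j' where j': "j' < n" "\<beta> j' = y'" using y im by auto
          have "(j,j') \<in> Off" using j j' y unfolding Off_def by auto
          thus "(y, y') \<in> (\<lambda>(j,j'). (\<beta> j, \<beta> j')) ` Off" using j j' by force
        qed
      qed
    qed
  qed
  have 2: "(\<Prod>(j,j')\<in>Off. (\<beta> j - \<beta> j')^2) = (\<Prod>(y,y')\<in>{(y,y'). y \<in> Y \<and> y' \<in> Y \<and> y \<noteq> y'}. (y - y')^2)"
    using prod.reindex_bij_betw[OF bb, of "\<lambda>(y,y'). (y - y')^2"] by (simp add: case_prod_beta)
  show ?thesis using 1 2 by simp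
qed


locale conc =
  fixes s t :: nat and A :: "(nat + nat \<times> nat) set"
  assumes t1: "t \<ge> 1" and Asub: "A \<subseteq> join_verts s t" and cA: "card A = s + t"
    and cl: "is_clique (join_edges s t) A"
begin

lemma AInl: "i < s \<Longrightarrow> Inl i \<in> A" using A_struct(1)[OF Asub cA cl] by blast
lemma Aex: "j < t \<Longrightarrow> (Inr(j,0) \<in> A) \<noteq> (Inr(j,1) \<in> A)" using A_struct(2)[OF Asub cA cl] by blast

definition Y :: "real set" where "Y = real ` {..<t}"

definition tm :: "((nat + nat \<times> nat) \<Rightarrow> real) \<Rightarrow> real" where
  "tm c = (\<Prod>(u,v)\<in>RR s t. c u - c v) * (\<Prod>v\<in>join_verts s t. 1 / phiS (SS s t A v) (c v))"

definition col :: "(nat \<Rightarrow> real) \<Rightarrow> (nat + nat \<times> nat) \<Rightarrow> real" where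
  "col \<beta> v = (case v of Inl i \<Rightarrow> real (t + i) | Inr p \<Rightarrow> \<beta> (fst p))"

lemma col_Inl[simp]: "col \<beta> (Inl i) = real (t + i)" unfolding col_def by simp
lemma col_Inr[simp]: "col \<beta> (Inr (j,k)) = \<beta> j" unfolding col_def by simp

definition proper :: "((nat + nat \<times> nat) \<Rightarrow> real) \<Rightarrow> bool" where
  "proper c \<longleftrightarrow> (\<forall>(u,v)\<in>RR s t. c u \<noteq> c v)"

lemma RR_sub: "RR s t \<subseteq> join_verts s t \<times> join_verts s t"
  using orsetup.or_sub[OF conc_orsetup RR_or] .

lemma finRR: "finite (RR s t)"
  using orsetup.or_fin[OF conc_orsetup RR_or] .

lemma tm_cong: assumes "\<forall>v\<in>join_verts s t. c v = d v" shows "tm c = tm d"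
proof -
  have "(\<Prod>(u,v)\<in>RR s t. c u - c v) = (\<Prod>(u,v)\<in>RR s t. d u - d v)"
    using assms RR_sub by (intro prod.cong refl) auto
  moreover have "(\<Prod>v\<in>join_verts s t. 1 / phiS (SS s t A v) (c v)) = (\<Prod>v\<in>join_verts s t. 1 / phiS (SS s t A v) (d v))"
    using assms by (intro prod.cong refl) auto
  ultimately show ?thesis unfolding tm_def by simp
qed

lemma tm_nonproper: assumes "\<not> proper c" shows "tm c = 0"
proof -
  obtain a b where ab: "(a,b) \<in> RR s t" "c a = c b" using assms unfolding proper_def by auto
  have "(\<Prod>(u,v)\<in>RR s t. c u - c v) = 0"
    by (subst prod_zero_iff[OF finRR]) (rule bexI[of _ "(a,b)"], use ab in auto)
  thus ?thesis unfolding tm_def by simp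
qed

lemma tm_proper_nz: assumes "proper c" shows "tm c \<noteq> 0"
proof -
  have "\<forall>x\<in>RR s t. (case x of (u,v) \<Rightarrow> c u - c v) \<noteq> 0" using assms unfolding proper_def by auto
  hence "(\<Prod>(u,v)\<in>RR s t. c u - c v) \<noteq> 0" by (subst prod_zero_iff[OF finRR]) blast
  moreover have "(\<Prod>v\<in>join_verts s t. 1 / phiS (SS s t A v) (c v)) \<noteq> 0"
    using fin_jv phiS_nz[OF fin_SS] by (auto simp: prod_zero_iff)
  ultimately show ?thesis unfolding tm_def by simp
qed

lemma pr_II: "proper c \<Longrightarrow> i < s \<Longrightarrow> i' < s \<Longrightarrow> i \<noteq> i' \<Longrightarrow> c (Inl i) \<noteq> c (Inl i')"
proof -
  assume p: "proper c" and a: "i < s" "i' < s" "i \<noteq> i'"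
  show ?thesis
  proof (cases "i < i'")
    case True
    hence "(Inl i, Inl i') \<in> RR s t" using a unfolding RR_def by blast
    thus ?thesis using p unfolding proper_def by blast
  next
    case False
    hence "i' < i" using a by simp
    hence "(Inl i', Inl i) \<in> RR s t" using a unfolding RR_def by blast
    thus ?thesis using p unfolding proper_def by fastforce
  qed
qed

lemma pr_IP: "proper c \<Longrightarrow> i < s \<Longrightarrow> j < t \<Longrightarrow> k < 2 \<Longrightarrow> c (Inl i) \<noteq> c (Inr (j,k))"
proof -
  assume p: "proper c" and a: "i < s" "j < t" "k < 2"
  hence "(Inl i, Inr (j,k)) \<in> RR s t" unfolding RR_def by blast
  thus ?thesis using p unfolding proper_def by blast
qed

lemma pr_PP: "proper c \<Longrightarrow> j < t \<Longrightarrow> j' < t \<Longrightarrow> k < 2 \<Longrightarrow> k' < 2 \<Longrightarrow> j \<noteq> j' \<Longrightarrow> c (Inr (j,k)) \<noteq> c (Inr (j',k'))"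
proof -
  assume p: "proper c" and a: "j < t" "j' < t" "k < 2" "k' < 2" "j \<noteq> j'"
  show ?thesis
  proof (cases "j < j'")
    case True
    hence "(Inr (j,k), Inr (j',k')) \<in> RR s t" using a unfolding RR_def by blast
    thus ?thesis using p unfolding proper_def by blast
  next
    case False
    hence "j' < j" using a by simp
    hence "(Inr (j',k'), Inr (j,k)) \<in> RR s t" using a unfolding RR_def by blast
    thus ?thesis using p unfolding proper_def by fastforce
  qed
qed

end

context conc begin

lemma card_Y: "card Y = t" unfolding Y_def by (simp add: card_image inj_on_def)

lemma PiE_in: "c \<in> PiE (join_verts s t) (SS s t A) \<Longrightarrow> v \<in> join_verts s t \<Longrightarrow> c v \<in> SS s t A v"
  by (auto simp: PiE_def Pi_def)

lemma struct:
  assumes cP: "c \<in> PiE (join_verts s t) (SS s t A)" and pr: "proper c"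
  shows "\<exists>\<beta>. bij_betw \<beta> {..<t} Y \<and> (\<forall>v\<in>join_verts s t. c v = col \<beta> v)"
proof -
  define kb where "kb j = (if Inr(j,0::nat) \<in> A then 1 else 0::nat)" for j
  define ka where "ka j = (if Inr(j,0::nat) \<in> A then 0 else 1::nat)" for j
  have kb2: "kb j < 2" "ka j < 2" "kb j \<noteq> ka j" for j unfolding kb_def ka_def by auto
  have kbA: "j < t \<Longrightarrow> Inr(j, kb j) \<notin> A" for j using Aex[of j] unfolding kb_def by auto
  have kaA: "j < t \<Longrightarrow> Inr(j, ka j) \<in> A" for j using Aex[of j] unfolding ka_def by auto
  have kcases: "k < 2 \<Longrightarrow> k = ka j \<or> k = kb j" for k j unfolding ka_def kb_def by auto
  define \<beta> where "\<beta> j = c (Inr (j, kb j))" for j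
  have \<beta>Y: "\<beta> j \<in> Y" if "j < t" for j
  proof -
    have "c (Inr (j, kb j)) \<in> SS s t A (Inr (j, kb j))" using PiE_in[OF cP] that kb2 by simp
    thus ?thesis unfolding \<beta>_def Y_def SS_Inr using kbA[OF that] by simp
  qed
  have inj: "inj_on \<beta> {..<t}"
  proof (rule inj_onI, rule ccontr)
    fix j j' assume "j \<in> {..<t}" "j' \<in> {..<t}" "\<beta> j = \<beta> j'" "j \<noteq> j'"
    hence "c (Inr (j, kb j)) \<noteq> c (Inr (j', kb j'))" using pr_PP[OF pr _ _ kb2(1) kb2(1)] by simp
    thus False using \<open>\<beta> j = \<beta> j'\<close> unfolding \<beta>_def by simp
  qed
  have bij: "bij_betw \<beta> {..<t} Y"
  proof -
    have "\<beta> ` {..<t} = Y"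
    proof (rule card_subset_eq)
      show "finite Y" unfolding Y_def by simp
      show "\<beta> ` {..<t} \<subseteq> Y" using \<beta>Y by auto
      show "card (\<beta> ` {..<t}) = card Y" using card_image[OF inj] card_Y by simp
    qed
    thus ?thesis using inj unfolding bij_betw_def by blast
  qed
  have notY: "c (Inl i) \<notin> Y" if "i < s" for i
  proof
    assume "c (Inl i) \<in> Y"
    then obtain j where j: "j < t" "c (Inl i) = \<beta> j" using bij unfolding bij_betw_def by auto
    thus False using pr_IP[OF pr that j(1) kb2(1)] unfolding \<beta>_def by simp
  qed
  have exm: "\<exists>m. c (Inl i) = real m \<and> t + i \<le> m \<and> m < s + t" if i: "i < s" for i
  proof -
    have "c (Inl i) \<in> SS s t A (Inl i)" using PiE_in[OF cP] i by simp
    then obtain m where m: "m \<in> {..<t} \<union> {t+i..<s+t}" "c (Inl i) = real m" unfolding SS_Inl by auto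
    have "m \<notin> {..<t}" using notY[OF i] m(2) unfolding Y_def by auto
    thus ?thesis using m by auto
  qed
  define h where "h i = (SOME m. c (Inl i) = real m \<and> t + i \<le> m \<and> m < s + t) - t" for i
  have hp: "c (Inl i) = real (t + h i) \<and> i \<le> h i \<and> h i < s" if i: "i < s" for i
  proof -
    define M where "M = (SOME m. c (Inl i) = real m \<and> t + i \<le> m \<and> m < s + t)"
    have "c (Inl i) = real M \<and> t + i \<le> M \<and> M < s + t" unfolding M_def by (rule someI_ex[OF exm[OF i]])
    moreover have "h i = M - t" unfolding h_def M_def ..
    ultimately show ?thesis by auto
  qed
  have hinj: "inj_on h {..<s}"
  proof (rule inj_onI, rule ccontr)
    fix i i' assume a: "i \<in> {..<s}" "i' \<in> {..<s}" "h i = h i'" "i \<noteq> i'"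
    hence "c (Inl i) = c (Inl i')" using hp[of i] hp[of i'] by simp
    thus False using pr_II[OF pr, of i i'] a by simp
  qed
  have hid: "\<forall>i<s. h i = i" using fix_lemma[OF hinj] hp by blast
  have cInl: "c (Inl i) = real (t + i)" if "i < s" for i using hp[OF that] hid that by simp
  have cA: "c (Inr (j, ka j)) = \<beta> j" if j: "j < t" for j
  proof -
    have "c (Inr (j, ka j)) \<in> SS s t A (Inr (j, ka j))" using PiE_in[OF cP] j kb2 by simp
    then obtain m where m: "m < s + t" "c (Inr (j, ka j)) = real m" unfolding SS_Inr using kaA[OF j] by auto
    have "m < t"
    proof (rule ccontr)
      assume "\<not> m < t"
      define i where "i = m - t"
      have i: "m = t + i" "i < s" using m(1) \<open>\<not> m < t\<close> unfolding i_def by arith+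
      hence "c (Inr (j, ka j)) = c (Inl i)" using m cInl by simp
      thus False using pr_IP[OF pr i(2) j kb2(2)[of j]] by simp
    qed
    hence "c (Inr (j, ka j)) \<in> Y" using m unfolding Y_def by auto
    then obtain j' where j': "j' < t" "c (Inr (j, ka j)) = \<beta> j'" using bij unfolding bij_betw_def by auto
    have "j' = j"
    proof (rule ccontr)
      assume "j' \<noteq> j"
      hence "c (Inr (j, ka j)) \<noteq> c (Inr (j', kb j'))" using pr_PP[OF pr j j'(1) kb2(2) kb2(1)] by simp
      thus False using j'(2) unfolding \<beta>_def by simp
    qed
    thus ?thesis using j' by simp
  qed
  have "\<forall>v\<in>join_verts s t. c v = col \<beta> v"
  proof
    fix v assume v: "v \<in> join_verts s t"
    show "c v = col \<beta> v"
    proof (cases v rule: Inr_cases)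
      case (L i) thus ?thesis using v cInl by simp
    next
      case (R j k)
      hence jk: "j < t" "k < 2" using v by auto
      show ?thesis using kcases[OF jk(2), of j] cA[OF jk(1)] R unfolding \<beta>_def by auto
    qed
  qed
  thus ?thesis using bij by blast
qed

end

lemma prod_cart: "(\<Prod>x\<in>A \<times> B. F x) = (\<Prod>a\<in>A. \<Prod>b\<in>B. F (a,b))"
  unfolding prod.cartesian_product by simp

context conc begin

definition KK :: real where
  "KK = (\<Prod>(i,i')\<in>Lt s. real (t+i) - real (t+i')) * (\<Prod>i<s. \<Prod>y\<in>Y. (real (t+i) - y)^2)
      * (\<Prod>(y,y')\<in>{(y,y'). y \<in> Y \<and> y' \<in> Y \<and> y \<noteq> y'}. (y - y')^2)
      * ((\<Prod>i<s. 1 / phiS (SS s t A (Inl i)) (real (t+i)))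
         * (\<Prod>y\<in>Y. 1 / phiS (real ` {..<s+t}) y * (1 / phiS (real ` {..<t}) y)))"

lemma prod_RR:
  "(\<Prod>x\<in>RR s t. g x) = (\<Prod>x\<in>RII s. g x) * (\<Prod>x\<in>RIP s t. g x) * (\<Prod>x\<in>RPP t. g x)"
proof -
  have f1: "finite (RII s)" unfolding RII_def using fin_Lt by simp
  have f2: "finite (RIP s t)" unfolding RIP_def by simp
  have f3: "finite (RPP t)" unfolding RPP_def using fin_Lt by simp
  have d1: "RII s \<inter> RIP s t = {}" unfolding RII_def RIP_def by auto
  have d2: "(RII s \<union> RIP s t) \<inter> RPP t = {}" unfolding RII_def RIP_def RPP_def by auto
  show ?thesis unfolding RR_split
    by (simp add: prod.union_disjoint f1 f2 f3 d1 d2)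
qed

lemma tm_col:
  assumes bij: "bij_betw \<beta> {..<t} Y"
  shows "tm (col \<beta>) = KK"
proof -
  define g where "g = (\<lambda>(u,v). col \<beta> u - col \<beta> v)"
  have i1: "inj_on (\<lambda>(i,i'). (Inl i :: nat + nat \<times> nat, Inl i' :: nat + nat \<times> nat)) (Lt s)" by (auto simp: inj_on_def)
  have i2: "inj_on (\<lambda>(i,j,k). (Inl i :: nat + nat \<times> nat, Inr (j,k) :: nat + nat \<times> nat)) ({..<s} \<times> {..<t} \<times> {..<2::nat})"
    by (auto simp: inj_on_def)
  have i3: "inj_on (\<lambda>((j,j'),(k,k')). (Inr (j,k) :: nat + nat \<times> nat, Inr (j',k') :: nat + nat \<times> nat)) (Lt t \<times> ({..<2::nat} \<times> {..<2::nat}))"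
    by (auto simp: inj_on_def)
  have P1: "(\<Prod>x\<in>RII s. g x) = (\<Prod>(i,i')\<in>Lt s. real (t+i) - real (t+i'))"
    unfolding RII_def prod.reindex[OF i1] comp_def by (intro prod.cong refl) (auto simp: g_def)
  have P2: "(\<Prod>x\<in>RIP s t. g x) = (\<Prod>i<s. \<Prod>y\<in>Y. (real (t+i) - y)^2)"
  proof -
    have "(\<Prod>x\<in>RIP s t. g x) = (\<Prod>x\<in>{..<s} \<times> {..<t} \<times> {..<2::nat}. real (t + fst x) - \<beta> (fst (snd x)))"
      unfolding RIP_def prod.reindex[OF i2] comp_def by (intro prod.cong refl) (auto simp: g_def)
    also have "\<dots> = (\<Prod>i<s. \<Prod>p\<in>{..<t} \<times> {..<2::nat}. real (t + i) - \<beta> (fst p))"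
      by (simp only: prod_cart fst_conv snd_conv)
    also have "\<dots> = (\<Prod>i<s. \<Prod>j<t. \<Prod>k<2::nat. real (t + i) - \<beta> j)"
      by (simp only: prod_cart fst_conv snd_conv)
    also have "\<dots> = (\<Prod>i<s. \<Prod>j<t. (real (t + i) - \<beta> j)^2)"
      by (simp only: prod_constant card_lessThan)
    also have "\<dots> = (\<Prod>i<s. \<Prod>y\<in>Y. (real (t+i) - y)^2)"
      by (intro prod.cong refl) (rule prod.reindex_bij_betw[OF bij])
    finally show ?thesis .
  qed
  have P3: "(\<Prod>x\<in>RPP t. g x) = (\<Prod>(y,y')\<in>{(y,y'). y \<in> Y \<and> y' \<in> Y \<and> y \<noteq> y'}. (y - y')^2)"
  proof -
    have "(\<Prod>x\<in>RPP t. g x) = (\<Prod>x\<in>Lt t \<times> ({..<2::nat} \<times> {..<2::nat}). \<beta> (fst (fst x)) - \<beta> (snd (fst x)))"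
      unfolding RPP_def prod.reindex[OF i3] comp_def by (intro prod.cong refl) (auto simp: g_def)
    also have "\<dots> = (\<Prod>p\<in>Lt t. \<Prod>q\<in>{..<2::nat} \<times> {..<2::nat}. \<beta> (fst p) - \<beta> (snd p))"
      by (simp only: prod_cart fst_conv snd_conv)
    also have "\<dots> = (\<Prod>p\<in>Lt t. (\<beta> (fst p) - \<beta> (snd p))^4)"
      by (simp only: prod_constant card_cartesian_product card_lessThan) simp
    also have "\<dots> = (\<Prod>(j,j')\<in>Lt t. (\<beta> j - \<beta> j')^4)" by (simp add: case_prod_beta)
    also have "\<dots> = (\<Prod>(y,y')\<in>{(y,y'). y \<in> Y \<and> y' \<in> Y \<and> y \<noteq> y'}. (y - y')^2)"
      by (rule off_lemma[OF bij])
    finally show ?thesis .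
  qed
  have W: "(\<Prod>v\<in>join_verts s t. 1 / phiS (SS s t A v) (col \<beta> v)) =
      (\<Prod>i<s. 1 / phiS (SS s t A (Inl i)) (real (t+i)))
         * (\<Prod>y\<in>Y. 1 / phiS (real ` {..<s+t}) y * (1 / phiS (real ` {..<t}) y))"
  proof -
    have "(\<Prod>v\<in>join_verts s t. 1 / phiS (SS s t A v) (col \<beta> v)) =
       (\<Prod>i<s. 1 / phiS (SS s t A (Inl i)) (real (t+i)))
         * (\<Prod>j<t. 1 / phiS (SS s t A (Inr (j,0))) (\<beta> j) * (1 / phiS (SS s t A (Inr (j,1))) (\<beta> j)))"
      unfolding prod_jv by simp
    also have "(\<Prod>j<t. 1 / phiS (SS s t A (Inr (j,0))) (\<beta> j) * (1 / phiS (SS s t A (Inr (j,1))) (\<beta> j)))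
        = (\<Prod>j<t. 1 / phiS (real ` {..<s+t}) (\<beta> j) * (1 / phiS (real ` {..<t}) (\<beta> j)))"
    proof (intro prod.cong refl)
      fix j assume "j \<in> {..<t}"
      hence "(Inr(j,0) \<in> A) \<noteq> (Inr(j,1) \<in> A)" using Aex by simp
      thus "1 / phiS (SS s t A (Inr (j,0))) (\<beta> j) * (1 / phiS (SS s t A (Inr (j,1))) (\<beta> j))
          = 1 / phiS (real ` {..<s+t}) (\<beta> j) * (1 / phiS (real ` {..<t}) (\<beta> j))"
        by (cases "Inr(j,0) \<in> A") (simp_all add: SS_Inr)
    qed
    also have "\<dots> = (\<Prod>y\<in>Y. 1 / phiS (real ` {..<s+t}) y * (1 / phiS (real ` {..<t}) y))"
      by (rule prod.reindex_bij_betw[OF bij])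
    finally show ?thesis .
  qed
  have "(\<Prod>(u,v)\<in>RR s t. col \<beta> u - col \<beta> v) = (\<Prod>x\<in>RR s t. g x)" unfolding g_def ..
  also have "\<dots> = (\<Prod>x\<in>RII s. g x) * (\<Prod>x\<in>RIP s t. g x) * (\<Prod>x\<in>RPP t. g x)" by (rule prod_RR)
  finally show ?thesis unfolding tm_def KK_def using P1 P2 P3 W by simp
qed

end

context conc begin

lemma bij_real: "bij_betw (\<lambda>j. real j) {..<t} Y"
  unfolding Y_def by (simp add: bij_betw_def inj_on_def)

definition c0 where "c0 = restrict (col (\<lambda>j. real j)) (join_verts s t)"

lemma c0_PiE: "c0 \<in> PiE (join_verts s t) (SS s t A)"
  unfolding c0_def
proof (rule restrict_PiE_iff[THEN iffD2], intro ballI)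
  fix v assume v: "v \<in> join_verts s t"
  show "col (\<lambda>j. real j) v \<in> SS s t A v"
  proof (cases v rule: Inr_cases)
    case (L i)
    hence "t + i \<in> {..<t} \<union> {t+i..<s+t}" using v by simp
    thus ?thesis using L by (simp only: col_Inl SS_Inl) (rule imageI)
  next
    case (R j k) thus ?thesis using v by (auto simp: SS_Inr)
  qed
qed

lemma c0_proper: "proper c0"
  unfolding proper_def
proof (intro ballI, clarify)
  fix u v assume uv: "(u,v) \<in> RR s t" "c0 u = c0 v"
  have "u \<in> join_verts s t" "v \<in> join_verts s t" using uv(1) RR_sub by auto
  hence e: "col (\<lambda>j. real j) u = col (\<lambda>j. real j) v" using uv(2) unfolding c0_def by simp
  show False using uv(1) e unfolding RR_def by auto
qed

lemma KK_nz: "KK \<noteq> 0"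
proof -
  have "tm c0 = tm (col (\<lambda>j. real j))" by (rule tm_cong) (simp add: c0_def)
  also have "\<dots> = KK" by (rule tm_col[OF bij_real])
  finally show ?thesis using tm_proper_nz[OF c0_proper] by simp
qed

lemma sum_nz: "(\<Sum>c\<in>PiE (join_verts s t) (SS s t A). tm c) \<noteq> 0"
proof -
  define Pr where "Pr = {c \<in> PiE (join_verts s t) (SS s t A). proper c}"
  have fin: "finite (PiE (join_verts s t) (SS s t A))" using fin_jv fin_SS by (simp add: finite_PiE)
  have "(\<Sum>c\<in>PiE (join_verts s t) (SS s t A). tm c) = (\<Sum>c\<in>PiE (join_verts s t) (SS s t A). if proper c then tm c else 0)"
    by (intro sum.cong refl) (simp add: tm_nonproper)
  also have "\<dots> = (\<Sum>c\<in>Pr. tm c)" unfolding Pr_def by (rule sum.inter_filter[symmetric, OF fin])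
  also have "\<dots> = (\<Sum>c\<in>Pr. KK)"
  proof (intro sum.cong refl)
    fix c assume "c \<in> Pr"
    hence cP: "c \<in> PiE (join_verts s t) (SS s t A)" and pr: "proper c" unfolding Pr_def by auto
    obtain \<beta> where b: "bij_betw \<beta> {..<t} Y" "\<forall>v\<in>join_verts s t. c v = col \<beta> v" using struct[OF cP pr] by blast
    have "tm c = tm (col \<beta>)" by (rule tm_cong[OF b(2)])
    thus "tm c = KK" using tm_col[OF b(1)] by simp
  qed
  also have "\<dots> = real (card Pr) * KK" by simp
  finally have e: "(\<Sum>c\<in>PiE (join_verts s t) (SS s t A). tm c) = real (card Pr) * KK" .
  have "c0 \<in> Pr" unfolding Pr_def using c0_PiE c0_proper by simp
  moreover have "finite Pr" unfolding Pr_def using fin by simp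
  ultimately have "card Pr \<noteq> 0" by auto
  thus ?thesis unfolding e using KK_nz by simp
qed

end

theorem mainTheorem4:
  fixes s t :: nat and A :: "(nat + nat \<times> nat) set" and f :: "nat + nat \<times> nat \<Rightarrow> nat"
  assumes "t \<ge> 1"
    and "A \<subseteq> join_verts s t" and "card A = s + t" and "is_clique (join_edges s t) A"
    and "\<forall>v\<in>join_verts s t. f v \<ge> 1"
    and "\<forall>v\<in>A. f v \<ge> s + t"
    and "\<forall>v\<in>join_verts s t - A. f v \<ge> t"
  shows "f_AT (join_verts s t) (join_edges s t) f"
proof -
  interpret C: conc s t A using assms(1-4) by unfold_locales
  interpret O: orsetup "join_verts s t" "join_edges s t" "RR s t" by (rule conc_orsetup)
  show ?thesis
  proof (rule O.AT_from_CN[of "SS s t A"])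
    show "\<forall>v\<in>join_verts s t. finite (SS s t A v) \<and> SS s t A v \<noteq> {}"
      using fin_SS ne_SS[OF assms(1)] by blast
    show "(\<Sum>v\<in>join_verts s t. card (SS s t A v) - 1) = card (RR s t)"
      by (rule sumd_conc[OF assms(1)]) (use C.Aex in blast)
    show "(\<Sum>c\<in>PiE (join_verts s t) (SS s t A). (\<Prod>(u,v)\<in>RR s t. c u - c v) *
            (\<Prod>v\<in>join_verts s t. 1 / phiS (SS s t A v) (c v))) \<noteq> 0"
      using C.sum_nz unfolding C.tm_def .
    show "\<forall>v\<in>join_verts s t. card (SS s t A v) \<le> f v"
    proof
      fix v assume v: "v \<in> join_verts s t"
      show "card (SS s t A v) \<le> f v"
      proof (cases v rule: Inr_cases)
        case (L i)
        hence i: "i < s" using v by simp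
        hence "f v \<ge> s + t" using assms(6) C.AInl L by blast
        thus ?thesis using card_SS_Inl[OF i, of t A] L by simp
      next
        case (R j k)
        show ?thesis
        proof (cases "v \<in> A")
          case True thus ?thesis using assms(6) card_SS_Inr[of s t A "(j,k)"] R by auto
        next
          case False thus ?thesis using assms(7) v card_SS_Inr[of s t A "(j,k)"] R by auto
        qed
      qed
    qed
  qed
qed


end
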